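(* Let $(a_\nu)_{\nu\in\mathbb{N}}\subset\mathbb{R}\setminus\{0\}$ with $\sum_{\nu=1}^\infty a_\nu^{-2}<\infty$, let $g$ and $g_n$ ($n\in\mathbb{N}$) be the functions with Fourier transforms $$\hat g(\omega)=\prod_{\nu=1}^{\infty}\frac{e^{2\pi i\omega/a_\nu}}{1+2\pi i\omega/a_\nu},\qquad \hat g_n(\omega)=\prod_{\nu=1}^{n}\frac{e^{2\pi i\omega/a_\nu}}{1+2\pi i\omega/a_\nu},$$ and let $a_0:=\min_{\nu\in\mathbb{N}}|a_\nu|$. Then for every $0\le\sigma<a_0$, $$\lim_{n\to\infty}|g(x)-g_n(x)|\,e^{\sigma|x|}=0$$ uniformly for $x\in\mathbb{R}$.
   Context: The Fourier transform is $\hat f(\omega)=\int_{\mathbb{R}} f(t)e^{-2\pi i t\omega}\,dt$. *)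

theory Defs
  imports "HOL-Analysis.Analysis"
begin

text \<open>Fourier transform convention: \<open>f^(w) = \<integral> f(t) e^(-2 pi i t w) dt\<close>;
  hence a function with (integrable) Fourier transform \<open>F\<close> is recovered by the
  inverse transform \<open>f(x) = \<integral> F(w) e^(2 pi i x w) dw\<close>.\<close>

definition inv_fourier :: "(real \<Rightarrow> complex) \<Rightarrow> real \<Rightarrow> complex" where
  "inv_fourier F x = integral\<^sup>L lborel (\<lambda>w. F w * exp (2 * pi * \<i> * of_real x * of_real w))"

definition pf_factor :: "real \<Rightarrow> real \<Rightarrow> complex" where
  "pf_factor a w = exp (2 * pi * \<i> * of_real w / of_real a) / (1 + 2 * pi * \<i> * of_real w / of_real a)"

text \<open>The sequence is \<open>a 1, a 2, \<dots>\<close> (the value \<open>a 0\<close> is not used).\<close>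
definition ghat :: "(nat \<Rightarrow> real) \<Rightarrow> real \<Rightarrow> complex" where
  "ghat a w = prodinf (\<lambda>\<nu>. pf_factor (a (Suc \<nu>)) w)"

definition ghat_n :: "(nat \<Rightarrow> real) \<Rightarrow> nat \<Rightarrow> real \<Rightarrow> complex" where
  "ghat_n a n w = (\<Prod>\<nu>\<in>{1..n}. pf_factor (a \<nu>) w)"

definition g :: "(nat \<Rightarrow> real) \<Rightarrow> real \<Rightarrow> complex" where
  "g a = inv_fourier (ghat a)"

definition g_n :: "(nat \<Rightarrow> real) \<Rightarrow> nat \<Rightarrow> real \<Rightarrow> complex" where
  "g_n a n = inv_fourier (ghat_n a n)"

end

theory Submission
  imports Defs "HOL-Complex_Analysis.Complex_Analysis" "HOL-Probability.Sinc_Integral" "HOL-Real_Asymp.Real_Asymp"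
begin


lemma integrable_inv_sq: "integrable lborel (\<lambda>x::real. inverse (1 + x^2))"
  using integrable_inverse_1_plus_square by (simp add: set_integrable_def)

lemma integrable_decay:
  fixes \<phi> :: "real \<Rightarrow> complex"
  assumes "continuous_on UNIV \<phi>" "\<And>x. norm (\<phi> x) \<le> B / (1 + x^2)"
  shows "integrable lborel \<phi>"
proof (rule Bochner_Integration.integrable_bound[where f="\<lambda>x. B * inverse (1 + x^2)"])
  show "integrable lborel (\<lambda>x. B * inverse (1 + x^2))"
    using integrable_inv_sq by simp
  show "\<phi> \<in> borel_measurable lborel"
    using assms(1) by (simp add: borel_measurable_continuous_onI)
  show "AE x in lborel. norm (\<phi> x) \<le> norm (B * inverse (1 + x^2))"
  proof (intro AE_I2)
    fix x
    have "norm (\<phi> x) \<le> B / (1 + x^2)" by fact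
    also have "\<dots> \<le> norm (B * inverse (1 + x^2))"
      using mult_right_mono[OF abs_ge_self[of B], of "inverse (1+x^2)"]
      by (simp add: divide_inverse abs_mult)
    finally show "norm (\<phi> x) \<le> norm (B * inverse (1 + x^2))" .
  qed
qed

lemma integral_Icc_tendsto:
  fixes \<phi> :: "real \<Rightarrow> complex"
  assumes "integrable lborel \<phi>"
  shows "(\<lambda>n::nat. integral {-real n..real n} \<phi>) \<longlonglongrightarrow> integral\<^sup>L lborel \<phi>"
proof -
  have si: "set_integrable lborel {-real n..real n} \<phi>" for n
    unfolding set_integrable_def by (rule integrable_mult_indicator) (use assms in auto)
  have eq: "integral {-real n..real n} \<phi> = integral\<^sup>L lborel (\<lambda>x. indicator {-real n..real n} x *\<^sub>R \<phi> x)" for n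
    using set_borel_integral_eq_integral(2)[OF si[of n]] by (simp add: set_lebesgue_integral_def)
  have "(\<lambda>n. integral\<^sup>L lborel (\<lambda>x. indicator {-real n..real n} x *\<^sub>R \<phi> x)) \<longlonglongrightarrow> integral\<^sup>L lborel \<phi>"
  proof (rule integral_dominated_convergence[where w = "\<lambda>x. norm (\<phi> x)"])
    show "\<phi> \<in> borel_measurable lborel" using assms by auto
    show "(\<lambda>x. indicator {-real n..real n} x *\<^sub>R \<phi> x) \<in> borel_measurable lborel" for n
      using assms by auto
    show "integrable lborel (\<lambda>x. norm (\<phi> x))" using assms by auto
    show "AE x in lborel. (\<lambda>n. indicator {-real n..real n} x *\<^sub>R \<phi> x) \<longlonglongrightarrow> \<phi> x"
    proof (intro AE_I2)
      fix x :: real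
      obtain N :: nat where "\<bar>x\<bar> \<le> real N" using real_arch_simple by blast
      hence "eventually (\<lambda>n. indicator {-real n..real n} x *\<^sub>R \<phi> x = \<phi> x) sequentially"
        unfolding eventually_sequentially by (intro exI[of _ N]) (auto simp: indicator_def)
      thus "(\<lambda>n. indicator {-real n..real n} x *\<^sub>R \<phi> x) \<longlonglongrightarrow> \<phi> x"
        by (rule tendsto_eventually)
    qed
    show "AE x in lborel. norm (indicator {-real n..real n} x *\<^sub>R \<phi> x) \<le> norm (\<phi> x)" for n
      by (intro AE_I2) (auto simp: indicator_def)
  qed
  thus ?thesis by (simp add: eq)
qed

lemma has_contour_integral_linepath_shift:
  "(f has_contour_integral I) (linepath (a + c) (b + c)) \<longleftrightarrow>
   ((\<lambda>z. f (z + c)) has_contour_integral I) (linepath a b)"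
  unfolding has_contour_integral_linepath
  by (simp add: linepath_def algebra_simps)

lemma strip_shift:
  fixes f :: "complex \<Rightarrow> complex" and \<tau> B :: real
  assumes hol: "f holomorphic_on S" and S: "open S" "convex S"
    and sub: "\<And>z. min 0 \<tau> \<le> Im z \<Longrightarrow> Im z \<le> max 0 \<tau> \<Longrightarrow> z \<in> S"
    and bnd: "\<And>z. min 0 \<tau> \<le> Im z \<Longrightarrow> Im z \<le> max 0 \<tau> \<Longrightarrow> norm (f z) \<le> B / (1 + (Re z)^2)"
  shows "integrable lborel (\<lambda>x. f (of_real x))"
    "integrable lborel (\<lambda>x. f (of_real x + \<i> * of_real \<tau>))"
    "integral\<^sup>L lborel (\<lambda>x. f (of_real x)) = integral\<^sup>L lborel (\<lambda>x. f (of_real x + \<i> * of_real \<tau>))"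
proof -
  define T where "T = {z. min 0 \<tau> \<le> Im z \<and> Im z \<le> max 0 \<tau>}"
  have TS: "T \<subseteq> S" using sub by (auto simp: T_def)
  have convT: "convex T"
    unfolding T_def using convex_Int[OF convex_halfspace_Im_ge[of "min 0 \<tau>"] convex_halfspace_Im_le[of "max 0 \<tau>"]]
    by (simp add: Collect_conj_eq)
  have contf: "continuous_on S f" using hol by (rule holomorphic_on_imp_continuous_on)
  have c0: "continuous_on UNIV (\<lambda>x. f (of_real x))"
    by (rule continuous_on_compose2[OF contf]) (auto intro!: continuous_intros sub)
  have c1: "continuous_on UNIV (\<lambda>x. f (of_real x + \<i> * of_real \<tau>))"
    by (rule continuous_on_compose2[OF contf]) (auto intro!: continuous_intros sub)
  show i0: "integrable lborel (\<lambda>x. f (of_real x))"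
  proof (rule integrable_decay[OF c0, of B])
    fix x :: real show "norm (f (of_real x)) \<le> B / (1 + x^2)" using bnd[of "of_real x"] by simp
  qed
  show i1: "integrable lborel (\<lambda>x. f (of_real x + \<i> * of_real \<tau>))"
  proof (rule integrable_decay[OF c1, of B])
    fix x :: real show "norm (f (of_real x + \<i> * of_real \<tau>)) \<le> B / (1 + x^2)"
      using bnd[of "of_real x + \<i> * of_real \<tau>"] by simp
  qed
  obtain F where F: "\<And>x. x \<in> S \<Longrightarrow> (F has_field_derivative f x) (at x within S)"
    using holomorphic_convex_primitive'[OF S(2) S(1) hol] by blast
  have prim: "(f has_contour_integral (F b - F a)) (linepath a b)" if "a \<in> T" "b \<in> T" for a b
    using contour_integral_primitive[OF F, of "linepath a b"] closed_segment_subset[OF that convT] TS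
    by auto
  define J0 where "J0 R = F (of_real R) - F (of_real (-R))" for R
  define J1 where "J1 R = F (of_real R + \<i> * of_real \<tau>) - F (of_real (-R) + \<i> * of_real \<tau>)" for R
  have h0: "((\<lambda>x. f (of_real x)) has_integral J0 R) {-R..R}" if "R > 0" for R
  proof -
    have "(f has_contour_integral J0 R) (linepath (of_real (-R)) (of_real R))"
      unfolding J0_def by (rule prim) (auto simp: T_def)
    thus ?thesis using has_contour_integral_linepath_Reals_iff[of "of_real (-R)" "of_real R" f] that
      by simp
  qed
  have h1: "((\<lambda>x. f (of_real x + \<i> * of_real \<tau>)) has_integral J1 R) {-R..R}" if "R > 0" for R
  proof -
    have "(f has_contour_integral J1 R) (linepath (of_real (-R) + \<i> * of_real \<tau>) (of_real R + \<i> * of_real \<tau>))"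
      unfolding J1_def by (rule prim) (auto simp: T_def)
    hence "((\<lambda>z. f (z + \<i> * of_real \<tau>)) has_contour_integral J1 R) (linepath (of_real (-R)) (of_real R))"
      using has_contour_integral_linepath_shift[of f "J1 R" "of_real (-R)" "\<i> * of_real \<tau>" "of_real R"]
      by simp
    thus ?thesis using has_contour_integral_linepath_Reals_iff[of "of_real (-R)" "of_real R" "\<lambda>z. f (z + \<i> * of_real \<tau>)"] that
      by simp
  qed
  have side: "norm (F (of_real R + \<i> * of_real \<tau>) - F (of_real R)) \<le> B / (1 + R^2) * \<bar>\<tau>\<bar>" for R
  proof -
    define V where "V = ({z. Re z \<le> R} \<inter> {z. Re z \<ge> R}) \<inter> T"
    have convV: "convex V" unfolding V_def
      by (intro convex_Int convT convex_halfspace_Re_le convex_halfspace_Re_ge)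
    have *: "(f has_contour_integral (F (of_real R + \<i> * of_real \<tau>) - F (of_real R))) (linepath (of_real R) (of_real R + \<i> * of_real \<tau>))"
      by (rule prim) (auto simp: T_def)
    have "norm (F (of_real R + \<i> * of_real \<tau>) - F (of_real R)) \<le> B / (1 + R^2) * norm ((of_real R + \<i> * of_real \<tau>) - of_real R)"
    proof (rule has_contour_integral_bound_linepath[OF *])
      have "0 \<le> B" using bnd[of 0] norm_ge_zero[of "f 0"] by (simp del: norm_ge_zero)
      thus "0 \<le> B / (1 + R^2)" by (simp add: add_nonneg_nonneg)
      fix x assume "x \<in> closed_segment (of_real R) (of_real R + \<i> * of_real \<tau>)"
      moreover have "closed_segment (of_real R) (of_real R + \<i> * of_real \<tau>) \<subseteq> V"
        by (rule closed_segment_subset[OF _ _ convV]) (auto simp: V_def T_def)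
      ultimately have "x \<in> V" by blast
      thus "norm (f x) \<le> B / (1 + R^2)" using bnd[of x] by (auto simp: V_def T_def)
    qed
    thus ?thesis by (simp add: norm_mult)
  qed
  have diff: "J0 R - J1 R = (F (of_real (-R) + \<i> * of_real \<tau>) - F (of_real (-R))) - (F (of_real R + \<i> * of_real \<tau>) - F (of_real R))" for R
    by (simp add: J0_def J1_def algebra_simps)
  have dbound: "norm (J0 R - J1 R) \<le> 2 * (B / (1 + R^2) * \<bar>\<tau>\<bar>)" for R
  proof -
    have "norm (J0 R - J1 R) \<le> norm (F (of_real (-R) + \<i> * of_real \<tau>) - F (of_real (-R))) + norm (F (of_real R + \<i> * of_real \<tau>) - F (of_real R))"
      unfolding diff by (rule norm_triangle_ineq4)
    also have "\<dots> \<le> B / (1 + (-R)^2) * \<bar>\<tau>\<bar> + B / (1 + R^2) * \<bar>\<tau>\<bar>"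
      by (intro add_mono side)
    finally show ?thesis by simp
  qed
  have lim0: "(\<lambda>n::nat. J0 (real n + 1) - J1 (real n + 1)) \<longlonglongrightarrow> 0"
  proof (rule Lim_null_comparison)
    show "\<forall>\<^sub>F n in sequentially. norm (J0 (real n + 1) - J1 (real n + 1)) \<le> 2 * (B / (1 + (real n + 1)^2) * \<bar>\<tau>\<bar>)"
      by (intro always_eventually allI dbound)
    show "(\<lambda>n::nat. 2 * (B / (1 + (real n + 1)^2) * \<bar>\<tau>\<bar>)) \<longlonglongrightarrow> 0"
      by real_asymp
  qed
  have lim1: "(\<lambda>n::nat. J0 (real n + 1) - J1 (real n + 1)) \<longlonglongrightarrow>
      integral\<^sup>L lborel (\<lambda>x. f (of_real x)) - integral\<^sup>L lborel (\<lambda>x. f (of_real x + \<i> * of_real \<tau>))"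
  proof -
    have e0: "J0 (real n + 1) = integral {-real (Suc n)..real (Suc n)} (\<lambda>x. f (of_real x))" for n
      using h0[of "real n + 1"] by (simp add: integral_unique add.commute)
    have e1: "J1 (real n + 1) = integral {-real (Suc n)..real (Suc n)} (\<lambda>x. f (of_real x + \<i> * of_real \<tau>))" for n
      using h1[of "real n + 1"] by (simp add: integral_unique add.commute)
    show ?thesis unfolding e0 e1
      by (intro tendsto_diff LIMSEQ_Suc integral_Icc_tendsto i0 i1)
  qed
  from LIMSEQ_unique[OF lim1 lim0] show "integral\<^sup>L lborel (\<lambda>x. f (of_real x)) = integral\<^sup>L lborel (\<lambda>x. f (of_real x + \<i> * of_real \<tau>))"
    by simp
qed




lemma norm_exp_sub_quad:
  fixes u :: complex
  shows "norm (exp u - 1 - u) \<le> norm u ^ 2 * exp (norm u)"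
proof -
  have s1: "(\<lambda>k. u ^ (k + 2) /\<^sub>R fact (k + 2)) sums (exp u - (\<Sum>k<2. u ^ k /\<^sub>R fact k))"
    by (intro sums_split_initial_segment exp_converges)
  have e: "exp u - 1 - u = (\<Sum>k. u ^ (k + 2) /\<^sub>R fact (k + 2))"
    using s1 by (simp add: sums_iff eval_nat_numeral)
  have s2: "(\<lambda>k. norm u ^ 2 * (norm u ^ k /\<^sub>R fact k)) sums (norm u ^ 2 * exp (norm u))"
    by (intro sums_mult exp_converges)
  have b: "norm (u ^ (k + 2) /\<^sub>R fact (k + 2)) \<le> norm u ^ 2 * (norm u ^ k /\<^sub>R fact k)" for k
  proof -
    have f: "(fact k :: real) \<le> fact (k + 2)" by (intro fact_mono) auto
    have "norm (u ^ (k + 2) /\<^sub>R fact (k + 2)) = norm u ^ 2 * (norm u ^ k / fact (k + 2))"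
      by (simp add: norm_power norm_mult power2_eq_square power_add mult_ac divide_inverse del: fact_Suc)
    also have "\<dots> \<le> norm u ^ 2 * (norm u ^ k / fact k)"
      by (intro mult_left_mono divide_left_mono f) auto
    also have "norm u ^ k / fact k = norm u ^ k /\<^sub>R fact k" by (simp add: divide_inverse mult.commute)
    finally show ?thesis .
  qed
  have "norm (\<Sum>k. u ^ (k + 2) /\<^sub>R fact (k + 2)) \<le> (\<Sum>k. norm u ^ 2 * (norm u ^ k /\<^sub>R fact k))"
    by (rule norm_suminf_le[OF b]) (use s2 in \<open>simp add: sums_iff\<close>)
  thus ?thesis using s2 e by (simp add: sums_iff)
qed

lemma exp_quad_bound:
  fixes r :: real assumes "\<bar>r\<bar> \<le> 1" shows "exp r \<le> 1 + r + r^2"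
proof (cases "r \<ge> 0")
  case True thus ?thesis using exp_bound assms by auto
next
  case False
  define s where "s = -r"
  have s: "0 < s" "s \<le> 1" using False assms by (auto simp: s_def)
  have "1 \<le> (1 + s) * (1 - s + s^2)" using s by (simp add: algebra_simps power2_eq_square power3_eq_cube)
  also have "\<dots> \<le> exp s * (1 - s + s^2)"
  proof (rule mult_right_mono)
    show "1 + s \<le> exp s" by (rule exp_ge_add_one_self)
    have "0 \<le> s^2" by simp
    thus "0 \<le> 1 - s + s^2" using s by linarith
  qed
  finally have "exp (-s) \<le> 1 - s + s^2" by (simp add: exp_minus field_simps)
  thus ?thesis by (simp add: s_def)
qed

definition P :: "real \<Rightarrow> complex \<Rightarrow> complex" where
  "P b z = exp (2 * pi * \<i> * z / of_real b) / (1 + 2 * pi * \<i> * z / of_real b)"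

lemma pf_factor_P: "pf_factor b w = P b (of_real w)"
  by (simp add: pf_factor_def P_def)

locale stp =
  fixes a :: "nat \<Rightarrow> real" and a0 t0 :: real
  assumes a0: "0 < a0" and alow: "\<And>\<nu>. \<nu> \<ge> 1 \<Longrightarrow> a0 \<le> \<bar>a \<nu>\<bar>"
    and t0: "0 \<le> t0" "2 * pi * t0 < a0"
    and summ: "summable (\<lambda>\<nu>. 1 / (a (Suc \<nu>))^2)"
begin

definition q where "q = 2 * pi * t0 / a0"

lemma q: "0 \<le> q" "q < 1"
  using a0 t0 by (auto simp: q_def field_simps)

lemma factor_bounds:
  assumes b: "a0 \<le> \<bar>b\<bar>" and z: "\<bar>Im z\<bar> \<le> t0"
  shows "norm (P b z) \<le> exp ((2 * pi * t0)^2 / ((1 - q) * b^2))"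
    and "norm (P b z) * max (1 - q) (2 * pi * \<bar>Re z\<bar> / \<bar>b\<bar>) \<le> exp q"
    and "norm (P b z - 1) \<le> (2 * pi * norm z / \<bar>b\<bar>)^2 * exp (2 * pi * norm z / a0) / (1 - q)"
    and "1 + 2 * pi * \<i> * z / of_real b \<noteq> 0"
proof -
  define u where "u = 2 * pi * \<i> * z / of_real b"
  have bnz: "b \<noteq> 0" using b a0 by auto
  have Reu: "Re u = - 2 * pi * Im z / b" by (simp add: u_def)
  have Imu: "Im u = 2 * pi * Re z / b" by (simp add: u_def)
  have normu: "norm u = 2 * pi * norm z / \<bar>b\<bar>" by (simp add: u_def norm_divide norm_mult)
  have "\<bar>Re u\<bar> = 2 * pi * \<bar>Im z\<bar> / \<bar>b\<bar>" by (simp add: Reu abs_divide abs_mult)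
  also have "\<dots> \<le> 2 * pi * t0 / a0"
    using z b a0 t0 by (intro frac_le) auto
  finally have Reu_le: "\<bar>Re u\<bar> \<le> q" by (simp add: q_def)
  have n1: "norm (1 + u) \<ge> 1 + Re u"
    using abs_Re_le_cmod[of "1 + u"] by simp
  have n1q: "norm (1 + u) \<ge> 1 - q" "1 + Re u \<ge> 1 - q" using n1 Reu_le by auto
  have n2: "norm (1 + u) \<ge> 2 * pi * \<bar>Re z\<bar> / \<bar>b\<bar>"
    using abs_Im_le_cmod[of "1 + u"] by (simp add: Imu abs_divide abs_mult)
  have pos: "1 + Re u > 0" "norm (1 + u) > 0" using n1q q by auto
  show "1 + 2 * pi * \<i> * z / of_real b \<noteq> 0" using pos unfolding u_def by auto
  have Pu: "P b z = exp u / (1 + u)" by (simp add: P_def u_def)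
  have nP: "norm (P b z) = exp (Re u) / norm (1 + u)" by (simp add: Pu norm_divide)
  show "norm (P b z) * max (1 - q) (2 * pi * \<bar>Re z\<bar> / \<bar>b\<bar>) \<le> exp q"
  proof -
    have "norm (P b z) * max (1 - q) (2 * pi * \<bar>Re z\<bar> / \<bar>b\<bar>) \<le> norm (P b z) * norm (1 + u)"
      using n1q n2 by (intro mult_left_mono) auto
    also have "\<dots> = exp (Re u)" using pos by (simp add: nP)
    also have "\<dots> \<le> exp q" using Reu_le by simp
    finally show ?thesis .
  qed
  show "norm (P b z) \<le> exp ((2 * pi * t0)^2 / ((1 - q) * b^2))"
  proof -
    have "norm (P b z) \<le> exp (Re u) / (1 + Re u)"
      unfolding nP using pos n1 by (intro divide_left_mono) auto
    also have "exp (Re u) \<le> 1 + Re u + (Re u)^2"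
      using Reu_le q by (intro exp_quad_bound) auto
    hence "exp (Re u) / (1 + Re u) \<le> (1 + Re u + (Re u)^2) / (1 + Re u)"
      using pos by (intro divide_right_mono) auto
    also have "\<dots> = 1 + (Re u)^2 / (1 + Re u)" using pos by (simp add: field_simps)
    also have "\<dots> \<le> 1 + (Re u)^2 / (1 - q)"
      using n1q q by (intro add_left_mono divide_left_mono) auto
    also have "\<dots> \<le> exp ((Re u)^2 / (1 - q))" by (rule exp_ge_add_one_self)
    also have "(Re u)^2 \<le> (2 * pi * t0 / b)^2"
    proof -
      have "\<bar>Re u\<bar> \<le> \<bar>2 * pi * t0 / b\<bar>"
        using z t0 by (simp add: Reu abs_divide abs_mult divide_right_mono)
      thus ?thesis by (simp only: abs_le_square_iff)
    qed
    hence "exp ((Re u)^2 / (1 - q)) \<le> exp ((2 * pi * t0 / b)^2 / (1 - q))"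
      using q by (simp add: divide_right_mono)
    also have "(2 * pi * t0 / b)^2 / (1 - q) = (2 * pi * t0)^2 / ((1 - q) * b^2)"
      by (simp add: power_divide)
    finally show ?thesis by simp
  qed
  show "norm (P b z - 1) \<le> (2 * pi * norm z / \<bar>b\<bar>)^2 * exp (2 * pi * norm z / a0) / (1 - q)"
  proof -
    have "P b z - 1 = (exp u - 1 - u) / (1 + u)" using pos unfolding Pu
      by (auto simp: field_simps)
    hence "norm (P b z - 1) = norm (exp u - 1 - u) / norm (1 + u)" by (simp add: norm_divide)
    also have "\<dots> \<le> norm u ^ 2 * exp (norm u) / (1 - q)"
      using n1q q norm_exp_sub_quad[of u] by (intro frac_le) auto
    also have "exp (norm u) \<le> exp (2 * pi * norm z / a0)"
      unfolding normu using b a0 by (simp add: frac_le)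
    hence "norm u ^ 2 * exp (norm u) / (1 - q) \<le> norm u ^ 2 * exp (2 * pi * norm z / a0) / (1 - q)"
      using q by (intro divide_right_mono mult_left_mono) auto
    finally show ?thesis by (simp add: normu)
  qed
qed


end


context stp begin

definition Gn :: "nat \<Rightarrow> complex \<Rightarrow> complex" where
  "Gn n z = (\<Prod>\<nu>\<in>{1..n}. P (a \<nu>) z)"

definition Ginf :: "complex \<Rightarrow> complex" where
  "Ginf z = prodinf (\<lambda>i. P (a (Suc i)) z)"

lemma ghat_n_eq: "ghat_n a n w = Gn n (of_real w)"
  by (simp add: ghat_n_def Gn_def pf_factor_P)

lemma ghat_eq: "ghat a w = Ginf (of_real w)"
  by (simp add: ghat_def Ginf_def pf_factor_P)

lemma Gn_lim:
  assumes z: "\<bar>Im z\<bar> \<le> t0"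
  shows "(\<lambda>n. Gn n z) \<longlonglongrightarrow> Ginf z"
proof -
  define f where "f i = P (a (Suc i)) z" for i
  define C where "C = (2 * pi * norm z)^2 * exp (2 * pi * norm z / a0) / (1 - q)"
  have "summable (\<lambda>i. norm (f i - 1))"
  proof (rule summable_comparison_test)
    show "summable (\<lambda>i. C * (1 / (a (Suc i))^2))" by (intro summable_mult summ)
    show "\<exists>N. \<forall>n\<ge>N. norm (norm (f n - 1)) \<le> C * (1 / (a (Suc n))^2)"
    proof (intro exI allI impI)
      fix n :: nat
      have "norm (f n - 1) \<le> (2 * pi * norm z / \<bar>a (Suc n)\<bar>)^2 * exp (2 * pi * norm z / a0) / (1 - q)"
        unfolding f_def by (rule factor_bounds(3)[OF alow z]) simp
      also have "\<dots> = C * (1 / (a (Suc n))^2)"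
        by (simp add: C_def power_divide)
      finally show "norm (norm (f n - 1)) \<le> C * (1 / (a (Suc n))^2)" by simp
    qed
  qed
  hence "convergent_prod f"
    by (intro abs_convergent_prod_imp_convergent_prod summable_imp_abs_convergent_prod)
  hence lim: "(\<lambda>n. \<Prod>i\<le>n. f i) \<longlonglongrightarrow> prodinf f" by (rule convergent_prod_LIMSEQ)
  have eq: "Gn (Suc n) z = (\<Prod>i\<le>n. f i)" for n
  proof -
    have "Gn (Suc n) z = (\<Prod>i<Suc n. P (a (Suc i)) z)"
      unfolding Gn_def using prod.atLeast1_atMost_eq[of "\<lambda>\<nu>. P (a \<nu>) z" "Suc n"] by simp
    also have "\<dots> = (\<Prod>i\<le>n. f i)" unfolding f_def lessThan_Suc_atMost ..
    finally show ?thesis .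
  qed
  have "prodinf f = Ginf z" unfolding Ginf_def f_def ..
  hence "(\<lambda>n. Gn (Suc n) z) \<longlonglongrightarrow> Ginf z" using lim unfolding eq by simp
  thus ?thesis by (rule LIMSEQ_imp_Suc)
qed

definition M where "M = exp ((2 * pi * t0)^2 / (1 - q) * (\<Sum>i. 1 / (a (Suc i))^2))"
definition cc where "cc = min ((1 - q)^2) ((2 * pi / \<bar>a 1\<bar>) * (2 * pi / \<bar>a 2\<bar>)) / 2"
definition K where "K = exp q * exp q * M / cc"

lemma cc_pos: "cc > 0"
proof -
  have "a 1 \<noteq> 0" "a 2 \<noteq> 0" using alow[of 1] alow[of 2] a0 by auto
  thus ?thesis using q by (auto simp: cc_def)
qed

lemma K_pos: "K > 0" using cc_pos by (simp add: K_def M_def)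

lemma tail_bound:
  assumes z: "\<bar>Im z\<bar> \<le> t0"
  shows "norm (\<Prod>\<nu>\<in>{3..n}. P (a \<nu>) z) \<le> M"
proof -
  define C0 where "C0 = (2 * pi * t0)^2 / (1 - q)"
  have C0: "C0 \<ge> 0" using q by (simp add: C0_def)
  have "norm (\<Prod>\<nu>\<in>{3..n}. P (a \<nu>) z) = (\<Prod>\<nu>\<in>{3..n}. norm (P (a \<nu>) z))"
    by (simp add: prod_norm)
  also have "\<dots> \<le> (\<Prod>\<nu>\<in>{3..n}. exp (C0 * (1 / (a \<nu>)^2)))"
  proof (intro prod_mono conjI norm_ge_zero)
    fix \<nu> assume "\<nu> \<in> {3..n}"
    hence "a0 \<le> \<bar>a \<nu>\<bar>" by (intro alow) auto
    from factor_bounds(1)[OF this z]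
    show "norm (P (a \<nu>) z) \<le> exp (C0 * (1 / (a \<nu>)^2))" by (simp add: C0_def)
  qed
  also have "\<dots> = exp (C0 * (\<Sum>\<nu>\<in>{3..n}. 1 / (a \<nu>)^2))"
    by (simp add: exp_sum sum_distrib_left)
  also have "\<dots> \<le> exp (C0 * (\<Sum>i. 1 / (a (Suc i))^2))"
  proof -
    have "(\<Sum>\<nu>\<in>{3..n}. 1 / (a \<nu>)^2) \<le> (\<Sum>\<nu>\<in>{1..n}. 1 / (a \<nu>)^2)"
      by (intro sum_mono2) auto
    also have "(\<Sum>\<nu>\<in>{1..n}. 1 / (a \<nu>)^2) = (\<Sum>i\<in>{..<n}. 1 / (a (Suc i))^2)"
      using sum.atLeast1_atMost_eq[of "\<lambda>\<nu>. 1 / (a \<nu>)^2" n] by simp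
    also have "\<dots> \<le> (\<Sum>i. 1 / (a (Suc i))^2)"
      by (intro sum_le_suminf summ) auto
    finally have "(\<Sum>\<nu>\<in>{3..n}. 1 / (a \<nu>)^2) \<le> (\<Sum>i. 1 / (a (Suc i))^2)" .
    thus ?thesis using C0 by (simp add: mult_left_mono)
  qed
  also have "\<dots> = M" by (simp add: M_def C0_def)
  finally show ?thesis .
qed

lemma Gn_bound:
  assumes z: "\<bar>Im z\<bar> \<le> t0" and n: "n \<ge> 2"
  shows "norm (Gn n z) \<le> K / (1 + (Re z)^2)"
proof -
  define x where "x = Re z"
  define m1 where "m1 = max (1 - q) (2 * pi * \<bar>x\<bar> / \<bar>a 1\<bar>)"
  define m2 where "m2 = max (1 - q) (2 * pi * \<bar>x\<bar> / \<bar>a 2\<bar>)"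
  have a12: "a0 \<le> \<bar>a 1\<bar>" "a0 \<le> \<bar>a 2\<bar>" by (auto intro: alow)
  have m1p: "m1 > 0" and m2p: "m2 > 0" using q by (auto simp: m1_def m2_def)
  have P1: "norm (P (a 1) z) \<le> exp q / m1"
    using factor_bounds(2)[OF a12(1) z] m1p by (simp add: m1_def x_def field_simps)
  have P2: "norm (P (a 2) z) \<le> exp q / m2"
    using factor_bounds(2)[OF a12(2) z] m2p by (simp add: m2_def x_def field_simps)
  have split: "{1..n} = insert 1 (insert 2 {3..n})" using n by auto
  have Geq: "Gn n z = P (a 1) z * (P (a 2) z * (\<Prod>\<nu>\<in>{3..n}. P (a \<nu>) z))"
    unfolding Gn_def split by simp
  have mm: "cc * (1 + x^2) \<le> m1 * m2"
  proof (cases "x^2 \<le> 1")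
    case True
    have "cc * (1 + x^2) \<le> cc * 2" using True cc_pos by (intro mult_left_mono) auto
    also have "\<dots> \<le> (1 - q) * (1 - q)" by (simp add: cc_def power2_eq_square)
    also have "\<dots> \<le> m1 * m2" using q m1p m2p by (intro mult_mono) (auto simp: m1_def m2_def)
    finally show ?thesis .
  next
    case False
    have "cc * (1 + x^2) \<le> cc * (2 * x^2)" using False cc_pos by (intro mult_left_mono) auto
    also have "\<dots> = min ((1 - q)^2) ((2 * pi / \<bar>a 1\<bar>) * (2 * pi / \<bar>a 2\<bar>)) * x^2" by (simp add: cc_def)
    also have "\<dots> \<le> ((2 * pi / \<bar>a 1\<bar>) * (2 * pi / \<bar>a 2\<bar>)) * x^2"
      by (intro mult_right_mono min.cobounded2) simp
    also have "\<dots> = (2 * pi * \<bar>x\<bar> / \<bar>a 1\<bar>) * (2 * pi * \<bar>x\<bar> / \<bar>a 2\<bar>)"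
      by (simp add: power2_eq_square field_simps)
    also have "\<dots> \<le> m1 * m2" using m1p m2p by (intro mult_mono) (auto simp: m1_def m2_def)
    finally show ?thesis .
  qed
  have "norm (Gn n z) = norm (P (a 1) z) * (norm (P (a 2) z) * norm (\<Prod>\<nu>\<in>{3..n}. P (a \<nu>) z))"
    by (simp add: Geq norm_mult)
  also have "\<dots> \<le> (exp q / m1) * ((exp q / m2) * M)"
  proof -
    have A: "norm (P (a 2) z) * norm (\<Prod>\<nu>\<in>{3..n}. P (a \<nu>) z) \<le> (exp q / m2) * M"
      by (rule mult_mono[OF P2 tail_bound[OF z]]) (use m2p in auto)
    show ?thesis by (rule mult_mono[OF P1 A]) (use m1p in auto)
  qed
  also have "\<dots> = exp q * exp q * M / (m1 * m2)" by simp
  also have "\<dots> \<le> exp q * exp q * M / (cc * (1 + x^2))"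
  proof (rule divide_left_mono[OF mm])
    show "0 \<le> exp q * exp q * M" by (simp add: M_def)
    have "0 < 1 + x^2" by (simp add: add_pos_nonneg)
    thus "0 < m1 * m2 * (cc * (1 + x^2))" using m1p m2p cc_pos by simp
  qed
  also have "\<dots> = K / (1 + (Re z)^2)" by (simp add: K_def x_def)
  finally show ?thesis .
qed

lemma Ginf_bound:
  assumes z: "\<bar>Im z\<bar> \<le> t0"
  shows "norm (Ginf z) \<le> K / (1 + (Re z)^2)"
proof (rule tendsto_le[OF _ tendsto_const])
  show "(\<lambda>n. norm (Gn n z)) \<longlonglongrightarrow> norm (Ginf z)" by (intro tendsto_norm Gn_lim z)
  show "\<forall>\<^sub>F n in sequentially. norm (Gn n z) \<le> K / (1 + (Re z)^2)"
    unfolding eventually_sequentially by (intro exI[of _ 2] allI impI Gn_bound z)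
qed simp

definition S0 where "S0 = {z. Im z < a0 / (2 * pi)} \<inter> {z. Im z > - (a0 / (2 * pi))}"

lemma S0: "open S0" "convex S0"
  unfolding S0_def by (auto intro!: open_Int convex_Int open_halfspace_Im_lt open_halfspace_Im_gt
      convex_halfspace_Im_lt convex_halfspace_Im_gt)

lemma S0_mem: assumes "\<bar>Im z\<bar> \<le> t0" shows "z \<in> S0"
proof -
  have "2 * pi * \<bar>Im z\<bar> \<le> 2 * pi * t0" using assms by (intro mult_left_mono) auto
  hence "2 * pi * \<bar>Im z\<bar> < a0" using t0 by linarith
  hence "\<bar>Im z\<bar> < a0 / (2 * pi)" by (simp add: field_simps)
  thus ?thesis by (auto simp: S0_def)
qed

lemma Gn_holo: "Gn n holomorphic_on S0"
proof -
  have nz: "1 + 2 * pi * \<i> * z / of_real (a \<nu>) \<noteq> 0" if "z \<in> S0" "\<nu> \<in> {1..n}" for z \<nu>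
  proof
    assume e: "1 + 2 * pi * \<i> * z / of_real (a \<nu>) = 0"
    have b: "a0 \<le> \<bar>a \<nu>\<bar>" using that by (intro alow) auto
    have "\<bar>Im z\<bar> < a0 / (2 * pi)" using that(1) by (auto simp: S0_def)
    hence "\<bar>Im z\<bar> * (2 * pi) < a0" by (simp add: pos_less_divide_eq)
    hence lt: "2 * pi * \<bar>Im z\<bar> < \<bar>a \<nu>\<bar>" using b by (simp add: mult.commute)
    have "\<bar>2 * pi * Im z / a \<nu>\<bar> = 2 * pi * \<bar>Im z\<bar> / \<bar>a \<nu>\<bar>" by (simp add: abs_divide abs_mult)
    also have "\<dots> < 1" using lt by (subst divide_less_eq) auto
    finally have lt1: "\<bar>2 * pi * Im z / a \<nu>\<bar> < 1" .
    have r1: "Re (1 + 2 * pi * \<i> * z / of_real (a \<nu>)) = 1 - 2 * pi * Im z / a \<nu>" by simp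
    have r0: "Re (1 + 2 * pi * \<i> * z / of_real (a \<nu>)) = 0" by (simp only: e zero_complex.sel)
    from r0 r1 have "1 - 2 * pi * Im z / a \<nu> = 0" by linarith
    thus False using lt1 by linarith
  qed
  show ?thesis unfolding Gn_def P_def
  proof (intro holomorphic_on_prod holomorphic_on_divide)
    fix \<nu> assume \<nu>: "\<nu> \<in> {1..n}"
    have "a \<nu> \<noteq> 0" using alow[of \<nu>] \<nu> a0 by auto
    thus "(\<lambda>z. exp (2 * pi * \<i> * z / of_real (a \<nu>))) holomorphic_on S0"
      by (intro holomorphic_intros) auto
    show "(\<lambda>z. 1 + 2 * pi * \<i> * z / of_real (a \<nu>)) holomorphic_on S0"
      using \<open>a \<nu> \<noteq> 0\<close> by (intro holomorphic_intros) auto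
    show "\<And>z. z \<in> S0 \<Longrightarrow> 1 + 2 * pi * \<i> * z / of_real (a \<nu>) \<noteq> 0"
      using nz \<nu> by blast
  qed
qed

end


context stp begin

definition ef :: "real \<Rightarrow> complex \<Rightarrow> complex" where
  "ef x z = exp (2 * pi * \<i> * of_real x * z)"

definition L :: "real \<Rightarrow> real \<Rightarrow> complex" where
  "L \<tau> \<omega> = of_real \<omega> + \<i> * of_real \<tau>"

lemma L_simps [simp]: "Re (L \<tau> \<omega>) = \<omega>" "Im (L \<tau> \<omega>) = \<tau>"
  by (simp_all add: L_def)

lemma norm_ef: "norm (ef x z) = exp (- (2 * pi * x * Im z))"
  by (simp add: ef_def)

lemma norm_ef_le: assumes "\<bar>Im z\<bar> \<le> t0" shows "norm (ef x z) \<le> exp (2 * pi * \<bar>x\<bar> * t0)"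
proof -
  have "- (2 * pi * x * Im z) \<le> \<bar>2 * pi * x * Im z\<bar>" by simp
  also have "\<dots> = 2 * pi * (\<bar>x\<bar> * \<bar>Im z\<bar>)" by (simp add: abs_mult)
  also have "\<dots> \<le> 2 * pi * (\<bar>x\<bar> * t0)" using assms by (intro mult_left_mono) auto
  finally show ?thesis by (simp add: norm_ef mult_ac)
qed

lemma cont_Gn_L: "continuous_on UNIV (\<lambda>\<omega>. Gn m (L \<tau> \<omega>))" if "\<bar>\<tau>\<bar> \<le> t0"
proof (rule continuous_on_compose2[OF holomorphic_on_imp_continuous_on[OF Gn_holo]])
  show "continuous_on UNIV (L \<tau>)" unfolding L_def by (intro continuous_intros)
  show "L \<tau> ` UNIV \<subseteq> S0" using S0_mem that by auto
qed

lemma meas_Gn_L: "\<bar>\<tau>\<bar> \<le> t0 \<Longrightarrow> (\<lambda>\<omega>. Gn m (L \<tau> \<omega>)) \<in> borel_measurable lborel"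
  using cont_Gn_L by (simp add: borel_measurable_continuous_onI)

lemma meas_Ginf_L: assumes "\<bar>\<tau>\<bar> \<le> t0" shows "(\<lambda>\<omega>. Ginf (L \<tau> \<omega>)) \<in> borel_measurable lborel"
  by (rule borel_measurable_LIMSEQ_metric[where f = "\<lambda>m \<omega>. Gn m (L \<tau> \<omega>)"])
     (use meas_Gn_L[OF assms] Gn_lim assms in auto)

lemma meas_ef_L: "(\<lambda>\<omega>. ef x (L \<tau> \<omega>)) \<in> borel_measurable lborel"
proof -
  have "continuous_on UNIV (\<lambda>\<omega>. ef x (L \<tau> \<omega>))" unfolding ef_def L_def by (intro continuous_intros)
  thus ?thesis by (simp add: borel_measurable_continuous_onI)
qed

definition D :: "real \<Rightarrow> nat \<Rightarrow> real" where
  "D \<tau> n = integral\<^sup>L lborel (\<lambda>\<omega>. norm (Ginf (L \<tau> \<omega>) - Gn n (L \<tau> \<omega>)))"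

lemma int_inv: "integrable lborel (\<lambda>\<omega>::real. c * inverse (1 + \<omega>^2))"
  using integrable_inv_sq by simp

lemma bound_diff:
  assumes "norm u \<le> K / (1 + \<omega>^2)" "norm v \<le> K / (1 + \<omega>^2)"
  shows "norm (norm (u - v)) \<le> 2 * K * inverse (1 + \<omega>^2)"
proof -
  have "norm (u - v) \<le> norm u + norm v" by (rule norm_triangle_ineq4)
  also have "\<dots> \<le> K / (1 + \<omega>^2) + K / (1 + \<omega>^2)" using assms by (rule add_mono)
  finally show ?thesis by (simp add: divide_inverse)
qed

lemma D_integrable:
  assumes "\<bar>\<tau>\<bar> \<le> t0" "n \<ge> 2"
  shows "integrable lborel (\<lambda>\<omega>. norm (Ginf (L \<tau> \<omega>) - Gn n (L \<tau> \<omega>)))"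
proof (rule Bochner_Integration.integrable_bound[OF int_inv[of "2 * K"]])
  show "(\<lambda>\<omega>. norm (Ginf (L \<tau> \<omega>) - Gn n (L \<tau> \<omega>))) \<in> borel_measurable lborel"
    using meas_Ginf_L[OF assms(1)] meas_Gn_L[OF assms(1)] by measurable
  show "AE \<omega> in lborel. norm (norm (Ginf (L \<tau> \<omega>) - Gn n (L \<tau> \<omega>))) \<le> norm (2 * K * inverse (1 + \<omega>^2))"
  proof (intro AE_I2)
    fix \<omega>
    have "norm (norm (Ginf (L \<tau> \<omega>) - Gn n (L \<tau> \<omega>))) \<le> 2 * K * inverse (1 + \<omega>^2)"
      using Ginf_bound[of "L \<tau> \<omega>"] Gn_bound[of "L \<tau> \<omega>" n] assms by (intro bound_diff) auto
    also have "\<dots> \<le> norm (2 * K * inverse (1 + \<omega>^2))" by simp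
    finally show "norm (norm (Ginf (L \<tau> \<omega>) - Gn n (L \<tau> \<omega>))) \<le> norm (2 * K * inverse (1 + \<omega>^2))" .
  qed
qed

lemma D_lim:
  assumes "\<bar>\<tau>\<bar> \<le> t0"
  shows "(\<lambda>n. D \<tau> n) \<longlonglongrightarrow> 0"
proof (rule LIMSEQ_offset[where k = 2])
  have "(\<lambda>i. integral\<^sup>L lborel (\<lambda>\<omega>. norm (Ginf (L \<tau> \<omega>) - Gn (i + 2) (L \<tau> \<omega>)))) \<longlonglongrightarrow> integral\<^sup>L lborel (\<lambda>\<omega>::real. 0::real)"
  proof (rule integral_dominated_convergence[where w = "\<lambda>\<omega>. 2 * K * inverse (1 + \<omega>^2)"
      and s = "\<lambda>i \<omega>. norm (Ginf (L \<tau> \<omega>) - Gn (i + 2) (L \<tau> \<omega>))" and f = "\<lambda>\<omega>. 0::real" and M = lborel])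
    show "(\<lambda>\<omega>::real. 0::real) \<in> borel_measurable lborel" by simp
    show "(\<lambda>\<omega>. norm (Ginf (L \<tau> \<omega>) - Gn (i + 2) (L \<tau> \<omega>))) \<in> borel_measurable lborel" for i
      using meas_Ginf_L[OF assms(1)] meas_Gn_L[OF assms(1)] by measurable
    show "integrable lborel (\<lambda>\<omega>. 2 * K * inverse (1 + \<omega>^2))" by (rule int_inv)
    show "AE \<omega> in lborel. (\<lambda>i. norm (Ginf (L \<tau> \<omega>) - Gn (i + 2) (L \<tau> \<omega>))) \<longlonglongrightarrow> 0"
    proof (intro AE_I2)
      fix \<omega>
      have "(\<lambda>i. Gn (i + 2) (L \<tau> \<omega>)) \<longlonglongrightarrow> Ginf (L \<tau> \<omega>)"
        using Gn_lim[of "L \<tau> \<omega>"] assms by (intro LIMSEQ_ignore_initial_segment) auto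
      hence "(\<lambda>i. Ginf (L \<tau> \<omega>) - Gn (i + 2) (L \<tau> \<omega>)) \<longlonglongrightarrow> Ginf (L \<tau> \<omega>) - Ginf (L \<tau> \<omega>)"
        by (intro tendsto_diff tendsto_const)
      hence "(\<lambda>i. norm (Ginf (L \<tau> \<omega>) - Gn (i + 2) (L \<tau> \<omega>))) \<longlonglongrightarrow> norm (Ginf (L \<tau> \<omega>) - Ginf (L \<tau> \<omega>))"
        by (rule tendsto_norm)
      thus "(\<lambda>i. norm (Ginf (L \<tau> \<omega>) - Gn (i + 2) (L \<tau> \<omega>))) \<longlonglongrightarrow> 0" by simp
    qed
    show "AE \<omega> in lborel. norm (norm (Ginf (L \<tau> \<omega>) - Gn (i + 2) (L \<tau> \<omega>))) \<le> 2 * K * inverse (1 + \<omega>^2)" for i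
    proof (intro AE_I2)
      fix \<omega>
      show "norm (norm (Ginf (L \<tau> \<omega>) - Gn (i + 2) (L \<tau> \<omega>))) \<le> 2 * K * inverse (1 + \<omega>^2)"
        using Ginf_bound[of "L \<tau> \<omega>"] Gn_bound[of "L \<tau> \<omega>" "i + 2"] assms by (intro bound_diff) auto
    qed
  qed
  thus "(\<lambda>i. D \<tau> (i + 2)) \<longlonglongrightarrow> 0" by (simp add: D_def)
qed


lemma diff_int:
  assumes "\<bar>\<tau>\<bar> \<le> t0" "m \<ge> 2" "n \<ge> 2"
  shows "integrable lborel (\<lambda>\<omega>. norm (Gn m (L \<tau> \<omega>) - Gn n (L \<tau> \<omega>)))"
proof (rule Bochner_Integration.integrable_bound[OF int_inv[of "2 * K"]])
  show "(\<lambda>\<omega>. norm (Gn m (L \<tau> \<omega>) - Gn n (L \<tau> \<omega>))) \<in> borel_measurable lborel"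
    using meas_Gn_L[OF assms(1), of m] meas_Gn_L[OF assms(1), of n] by measurable
  show "AE \<omega> in lborel. norm (norm (Gn m (L \<tau> \<omega>) - Gn n (L \<tau> \<omega>))) \<le> norm (2 * K * inverse (1 + \<omega>^2))"
  proof (intro AE_I2)
    fix \<omega>
    have "norm (norm (Gn m (L \<tau> \<omega>) - Gn n (L \<tau> \<omega>))) \<le> 2 * K * inverse (1 + \<omega>^2)"
      using Gn_bound[of "L \<tau> \<omega>" m] Gn_bound[of "L \<tau> \<omega>" n] assms by (intro bound_diff) auto
    also have "\<dots> \<le> norm (2 * K * inverse (1 + \<omega>^2))" by simp
    finally show "norm (norm (Gn m (L \<tau> \<omega>) - Gn n (L \<tau> \<omega>))) \<le> norm (2 * K * inverse (1 + \<omega>^2))" .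
  qed
qed

lemma g_n_shift:
  assumes m: "m \<ge> 2" and \<tau>: "\<bar>\<tau>\<bar> \<le> t0"
  shows "integrable lborel (\<lambda>\<omega>. Gn m (L \<tau> \<omega>) * ef x (L \<tau> \<omega>))"
    and "g_n a m x = integral\<^sup>L lborel (\<lambda>\<omega>. Gn m (L \<tau> \<omega>) * ef x (L \<tau> \<omega>))"
proof -
  define f where "f z = Gn m z * ef x z" for z
  have hol: "f holomorphic_on S0" unfolding f_def ef_def
    by (intro holomorphic_on_mult Gn_holo holomorphic_intros)
  have sub: "\<bar>Im z\<bar> \<le> t0" if "min 0 \<tau> \<le> Im z" "Im z \<le> max 0 \<tau>" for z
    using that \<tau> t0 by (auto simp: min_def max_def split: if_splits)
  have bnd: "norm (f z) \<le> (K * exp (2 * pi * \<bar>x\<bar> * t0)) / (1 + (Re z)^2)"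
    if "min 0 \<tau> \<le> Im z" "Im z \<le> max 0 \<tau>" for z
  proof -
    have z: "\<bar>Im z\<bar> \<le> t0" using sub that .
    have "norm (f z) = norm (Gn m z) * norm (ef x z)" by (simp add: f_def norm_mult)
    also have "\<dots> \<le> K / (1 + (Re z)^2) * exp (2 * pi * \<bar>x\<bar> * t0)"
      by (intro mult_mono Gn_bound norm_ef_le z m) (use K_pos in auto)
    finally show ?thesis by simp
  qed
  have subS: "z \<in> S0" if "min 0 \<tau> \<le> Im z" "Im z \<le> max 0 \<tau>" for z
    using S0_mem sub that by blast
  note r = strip_shift[where \<tau> = \<tau> and B = "K * exp (2 * pi * \<bar>x\<bar> * t0)", OF hol S0 subS bnd]
  have Lf: "(\<lambda>\<omega>. f (of_real \<omega> + \<i> * of_real \<tau>)) = (\<lambda>\<omega>. Gn m (L \<tau> \<omega>) * ef x (L \<tau> \<omega>))"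
    by (simp add: f_def L_def)
  show "integrable lborel (\<lambda>\<omega>. Gn m (L \<tau> \<omega>) * ef x (L \<tau> \<omega>))" using r(2) unfolding Lf .
  have "g_n a m x = integral\<^sup>L lborel (\<lambda>\<omega>. f (of_real \<omega>))"
    by (simp add: g_n_def inv_fourier_def ghat_n_eq f_def ef_def)
  also have "\<dots> = integral\<^sup>L lborel (\<lambda>\<omega>. Gn m (L \<tau> \<omega>) * ef x (L \<tau> \<omega>))" using r(3) unfolding Lf .
  finally show "g_n a m x = integral\<^sup>L lborel (\<lambda>\<omega>. Gn m (L \<tau> \<omega>) * ef x (L \<tau> \<omega>))" .
qed

lemma diff_bound:
  assumes m: "m \<ge> 2" and n: "n \<ge> 2" and \<tau>: "\<bar>\<tau>\<bar> \<le> t0"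
  shows "norm (g_n a m x - g_n a n x) \<le> exp (- (2 * pi * x * \<tau>)) * (D \<tau> m + D \<tau> n)"
proof -
  note im = g_n_shift(1)[OF m \<tau>, of x] and em = g_n_shift(2)[OF m \<tau>, of x]
  note in_ = g_n_shift(1)[OF n \<tau>, of x] and en = g_n_shift(2)[OF n \<tau>, of x]
  have "g_n a m x - g_n a n x = integral\<^sup>L lborel (\<lambda>\<omega>. Gn m (L \<tau> \<omega>) * ef x (L \<tau> \<omega>) - Gn n (L \<tau> \<omega>) * ef x (L \<tau> \<omega>))"
    using Bochner_Integration.integral_diff[OF im in_] em en by simp
  hence "norm (g_n a m x - g_n a n x) \<le> integral\<^sup>L lborel (\<lambda>\<omega>. norm (Gn m (L \<tau> \<omega>) * ef x (L \<tau> \<omega>) - Gn n (L \<tau> \<omega>) * ef x (L \<tau> \<omega>)))"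
    by (simp add: integral_norm_bound)
  also have "\<dots> = integral\<^sup>L lborel (\<lambda>\<omega>. exp (- (2 * pi * x * \<tau>)) * norm (Gn m (L \<tau> \<omega>) - Gn n (L \<tau> \<omega>)))"
  proof (rule Bochner_Integration.integral_cong[OF refl])
    fix \<omega>
    have "Gn m (L \<tau> \<omega>) * ef x (L \<tau> \<omega>) - Gn n (L \<tau> \<omega>) * ef x (L \<tau> \<omega>) = (Gn m (L \<tau> \<omega>) - Gn n (L \<tau> \<omega>)) * ef x (L \<tau> \<omega>)"
      by (simp add: algebra_simps)
    thus "norm (Gn m (L \<tau> \<omega>) * ef x (L \<tau> \<omega>) - Gn n (L \<tau> \<omega>) * ef x (L \<tau> \<omega>)) = exp (- (2 * pi * x * \<tau>)) * norm (Gn m (L \<tau> \<omega>) - Gn n (L \<tau> \<omega>))"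
      by (simp add: norm_mult norm_ef)
  qed
  also have "\<dots> = exp (- (2 * pi * x * \<tau>)) * integral\<^sup>L lborel (\<lambda>\<omega>. norm (Gn m (L \<tau> \<omega>) - Gn n (L \<tau> \<omega>)))"
    by simp
  also have "\<dots> \<le> exp (- (2 * pi * x * \<tau>)) * (D \<tau> m + D \<tau> n)"
  proof (rule mult_left_mono)
    have "integral\<^sup>L lborel (\<lambda>\<omega>. norm (Gn m (L \<tau> \<omega>) - Gn n (L \<tau> \<omega>))) \<le>
          integral\<^sup>L lborel (\<lambda>\<omega>. norm (Ginf (L \<tau> \<omega>) - Gn m (L \<tau> \<omega>)) + norm (Ginf (L \<tau> \<omega>) - Gn n (L \<tau> \<omega>)))"
    proof (rule integral_mono)
      show "integrable lborel (\<lambda>\<omega>. norm (Gn m (L \<tau> \<omega>) - Gn n (L \<tau> \<omega>)))" by (rule diff_int[OF \<tau> m n])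
      show "integrable lborel (\<lambda>\<omega>. norm (Ginf (L \<tau> \<omega>) - Gn m (L \<tau> \<omega>)) + norm (Ginf (L \<tau> \<omega>) - Gn n (L \<tau> \<omega>)))"
        by (intro Bochner_Integration.integrable_add D_integrable \<tau> m n)
      fix \<omega>
      have "Gn m (L \<tau> \<omega>) - Gn n (L \<tau> \<omega>) = (Ginf (L \<tau> \<omega>) - Gn n (L \<tau> \<omega>)) - (Ginf (L \<tau> \<omega>) - Gn m (L \<tau> \<omega>))"
        by simp
      thus "norm (Gn m (L \<tau> \<omega>) - Gn n (L \<tau> \<omega>)) \<le> norm (Ginf (L \<tau> \<omega>) - Gn m (L \<tau> \<omega>)) + norm (Ginf (L \<tau> \<omega>) - Gn n (L \<tau> \<omega>))"
        using norm_triangle_ineq4[of "Ginf (L \<tau> \<omega>) - Gn n (L \<tau> \<omega>)" "Ginf (L \<tau> \<omega>) - Gn m (L \<tau> \<omega>)"] by simp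
    qed
    also have "\<dots> = D \<tau> m + D \<tau> n" unfolding D_def
      by (intro Bochner_Integration.integral_add D_integrable \<tau> m n)
    finally show "integral\<^sup>L lborel (\<lambda>\<omega>. norm (Gn m (L \<tau> \<omega>) - Gn n (L \<tau> \<omega>))) \<le> D \<tau> m + D \<tau> n" .
  qed simp
  finally show ?thesis .
qed

lemma g_lim: "(\<lambda>m. g_n a m x) \<longlonglongrightarrow> g a x"
proof -
  have L0: "L 0 \<omega> = of_real \<omega>" for \<omega> by (simp add: L_def)
  have t00: "\<bar>0::real\<bar> \<le> t0" using t0 by simp
  have eqn: "g_n a m x = integral\<^sup>L lborel (\<lambda>\<omega>. Gn m (L 0 \<omega>) * ef x (L 0 \<omega>))" for m
    by (simp add: g_n_def inv_fourier_def ghat_n_eq ef_def L0)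
  have eqg: "g a x = integral\<^sup>L lborel (\<lambda>\<omega>. Ginf (L 0 \<omega>) * ef x (L 0 \<omega>))"
    by (simp add: g_def inv_fourier_def ghat_eq ef_def L0)
  have "(\<lambda>i. integral\<^sup>L lborel (\<lambda>\<omega>. Gn (i + 2) (L 0 \<omega>) * ef x (L 0 \<omega>))) \<longlonglongrightarrow> integral\<^sup>L lborel (\<lambda>\<omega>. Ginf (L 0 \<omega>) * ef x (L 0 \<omega>))"
  proof (rule integral_dominated_convergence[where w = "\<lambda>\<omega>. K * inverse (1 + \<omega>^2)"
      and s = "\<lambda>i \<omega>. Gn (i + 2) (L 0 \<omega>) * ef x (L 0 \<omega>)" and f = "\<lambda>\<omega>. Ginf (L 0 \<omega>) * ef x (L 0 \<omega>)" and M = lborel])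
    show "(\<lambda>\<omega>. Ginf (L 0 \<omega>) * ef x (L 0 \<omega>)) \<in> borel_measurable lborel"
      using meas_Ginf_L[OF t00] meas_ef_L[of x 0] by measurable
    show "(\<lambda>\<omega>. Gn (i + 2) (L 0 \<omega>) * ef x (L 0 \<omega>)) \<in> borel_measurable lborel" for i
      using meas_Gn_L[OF t00, of "i + 2"] meas_ef_L[of x 0] by measurable
    show "integrable lborel (\<lambda>\<omega>. K * inverse (1 + \<omega>^2))" by (rule int_inv)
    show "AE \<omega> in lborel. (\<lambda>i. Gn (i + 2) (L 0 \<omega>) * ef x (L 0 \<omega>)) \<longlonglongrightarrow> Ginf (L 0 \<omega>) * ef x (L 0 \<omega>)"
    proof (intro AE_I2)
      fix \<omega>
      have "(\<lambda>i. Gn (i + 2) (L 0 \<omega>)) \<longlonglongrightarrow> Ginf (L 0 \<omega>)"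
        using Gn_lim[of "L 0 \<omega>"] t0 by (intro LIMSEQ_ignore_initial_segment) auto
      thus "(\<lambda>i. Gn (i + 2) (L 0 \<omega>) * ef x (L 0 \<omega>)) \<longlonglongrightarrow> Ginf (L 0 \<omega>) * ef x (L 0 \<omega>)"
        by (intro tendsto_mult tendsto_const)
    qed
    show "AE \<omega> in lborel. norm (Gn (i + 2) (L 0 \<omega>) * ef x (L 0 \<omega>)) \<le> K * inverse (1 + \<omega>^2)" for i
    proof (intro AE_I2)
      fix \<omega>
      have "norm (Gn (i + 2) (L 0 \<omega>)) \<le> K / (1 + \<omega>^2)" using Gn_bound[of "L 0 \<omega>" "i + 2"] t0 by simp
      thus "norm (Gn (i + 2) (L 0 \<omega>) * ef x (L 0 \<omega>)) \<le> K * inverse (1 + \<omega>^2)"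
        by (simp add: norm_mult norm_ef divide_inverse)
    qed
  qed
  hence "(\<lambda>i. g_n a (i + 2) x) \<longlonglongrightarrow> g a x" by (simp add: eqn eqg)
  thus ?thesis by (rule LIMSEQ_offset)
qed

lemma final_bound:
  assumes n: "n \<ge> 2"
  shows "norm (g a x - g_n a n x) * exp (2 * pi * t0 * \<bar>x\<bar>) \<le> max (D t0 n) (D (- t0) n)"
proof -
  define \<tau> where "\<tau> = (if x \<ge> 0 then t0 else - t0)"
  have \<tau>: "\<bar>\<tau>\<bar> \<le> t0" using t0 by (simp add: \<tau>_def)
  have z: "- (2 * pi * x * \<tau>) + 2 * pi * t0 * \<bar>x\<bar> = 0"
    unfolding \<tau>_def by (cases "x \<ge> 0") (simp_all add: algebra_simps)
  have e: "exp (- (2 * pi * x * \<tau>)) * exp (2 * pi * t0 * \<bar>x\<bar>) = 1"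
    by (simp only: exp_add[symmetric] z exp_zero)
  have le: "norm (g_n a m x - g_n a n x) * exp (2 * pi * t0 * \<bar>x\<bar>) \<le> D \<tau> m + D \<tau> n" if m: "m \<ge> 2" for m
  proof -
    have "norm (g_n a m x - g_n a n x) * exp (2 * pi * t0 * \<bar>x\<bar>) \<le>
          exp (- (2 * pi * x * \<tau>)) * (D \<tau> m + D \<tau> n) * exp (2 * pi * t0 * \<bar>x\<bar>)"
      by (intro mult_right_mono diff_bound m n \<tau>) simp
    also have "\<dots> = D \<tau> m + D \<tau> n" using e by (simp add: mult_ac)
    finally show ?thesis .
  qed
  have l1: "(\<lambda>m. norm (g_n a m x - g_n a n x) * exp (2 * pi * t0 * \<bar>x\<bar>)) \<longlonglongrightarrow> norm (g a x - g_n a n x) * exp (2 * pi * t0 * \<bar>x\<bar>)"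
    by (intro tendsto_mult tendsto_norm tendsto_diff g_lim tendsto_const)
  have l2: "(\<lambda>m. D \<tau> m + D \<tau> n) \<longlonglongrightarrow> 0 + D \<tau> n"
    by (intro tendsto_add D_lim \<tau> tendsto_const)
  have "norm (g a x - g_n a n x) * exp (2 * pi * t0 * \<bar>x\<bar>) \<le> 0 + D \<tau> n"
  proof (rule tendsto_le[OF _ l2 l1])
    show "\<forall>\<^sub>F m in sequentially. norm (g_n a m x - g_n a n x) * exp (2 * pi * t0 * \<bar>x\<bar>) \<le> D \<tau> m + D \<tau> n"
      unfolding eventually_sequentially by (intro exI[of _ 2] allI impI le)
  qed simp
  also have "\<dots> \<le> max (D t0 n) (D (- t0) n)" by (simp add: \<tau>_def)
  finally show ?thesis .
qed

lemma unif:
  "uniform_limit UNIV (\<lambda>n x. norm (g a x - g_n a n x) * exp (2 * pi * t0 * \<bar>x\<bar>)) (\<lambda>x. 0) sequentially"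
proof (rule uniform_limitI)
  fix e :: real assume e: "0 < e"
  have "(\<lambda>n. max (D t0 n) (D (- t0) n)) \<longlonglongrightarrow> max 0 0"
    by (intro tendsto_max D_lim) (use t0 in auto)
  hence ev1: "\<forall>\<^sub>F n in sequentially. max (D t0 n) (D (- t0) n) < e"
    using e by (intro order_tendstoD(2)) auto
  have ev2: "\<forall>\<^sub>F n in sequentially. n \<ge> 2" by (rule eventually_ge_at_top)
  show "\<forall>\<^sub>F n in sequentially. \<forall>x\<in>UNIV. dist (norm (g a x - g_n a n x) * exp (2 * pi * t0 * \<bar>x\<bar>)) 0 < e"
    using ev1 ev2
  proof eventually_elim
    case (elim n)
    show ?case
    proof
      fix x :: real
      have "dist (norm (g a x - g_n a n x) * exp (2 * pi * t0 * \<bar>x\<bar>)) 0 = norm (g a x - g_n a n x) * exp (2 * pi * t0 * \<bar>x\<bar>)"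
        by simp
      also have "\<dots> \<le> max (D t0 n) (D (- t0) n)" using final_bound elim by blast
      also have "\<dots> < e" using elim by blast
      finally show "dist (norm (g a x - g_n a n x) * exp (2 * pi * t0 * \<bar>x\<bar>)) 0 < e" .
    qed
  qed
qed

end



theorem mainTheorem3:
  fixes a :: "nat \<Rightarrow> real" and \<sigma> :: real
  assumes nonzero: "\<And>\<nu>. \<nu> \<ge> 1 \<Longrightarrow> a \<nu> \<noteq> 0"
    and summ: "summable (\<lambda>\<nu>. 1 / (a (Suc \<nu>))\<^sup>2)"
    and sigma_nonneg: "0 \<le> \<sigma>"
    and sigma_less: "\<sigma> < Inf {\<bar>a \<nu>\<bar> | \<nu>. \<nu> \<ge> 1}"
  shows "uniform_limit UNIV
           (\<lambda>n x. cmod (g a x - g_n a n x) * exp (\<sigma> * \<bar>x\<bar>))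
           (\<lambda>x. 0) sequentially"
proof -
  define a0 where "a0 = Inf {\<bar>a \<nu>\<bar> | \<nu>. \<nu> \<ge> 1}"
  define t0 where "t0 = \<sigma> / (2 * pi)"
  have alow: "a0 \<le> \<bar>a \<nu>\<bar>" if "\<nu> \<ge> 1" for \<nu>
    unfolding a0_def by (rule cInf_lower) (use that in \<open>auto intro!: bdd_belowI[of _ 0]\<close>)
  have a0: "0 < a0" using sigma_nonneg sigma_less by (simp add: a0_def)
  have st: "2 * pi * t0 = \<sigma>" by (simp add: t0_def)
  interpret stp a a0 t0
  proof
    show "0 < a0" by (rule a0)
    show "\<And>\<nu>. 1 \<le> \<nu> \<Longrightarrow> a0 \<le> \<bar>a \<nu>\<bar>" by (rule alow)
    show "0 \<le> t0" using sigma_nonneg by (simp add: t0_def)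
    show "2 * pi * t0 < a0" using sigma_less by (simp add: st a0_def)
    show "summable (\<lambda>\<nu>. 1 / (a (Suc \<nu>))^2)" by (rule summ)
  qed
  show ?thesis using unif by (simp add: st)
qed


end
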